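(* For each $k\in\mathbb N$, the ordinal $\omega^{\omega^k}$ (as the linear ordering $(\omega^{\omega^k};\le)$) admits a tree-automatic presentation over a unary alphabet $\Sigma$, i.e. with all universe trees being $\Sigma$-trees for some one-letter alphabet $\Sigma$.
   Context: A $\Sigma$-tree is a map $t:D\to\Sigma$ where $D$ is a finite prefix-closed subset of $\{0,1\}^*$. A tree automaton is deterministic bottom-up: $(Q,\iota,\delta:\Sigma\times Q\times Q\to Q,F)$, with missing children assigned state $\iota$ and acceptance determined by the root state. The convolution of trees $t_1,\dots,t_n$ is the tree on $\bigcup_i\mathrm{dom}(t_i)$ labelled by tuples, padding with a fresh symbol $\Box$ where a $t_i$ is undefined. A tree-automatic presentation of a structure $(A;\le)$ consists of tree automata $\mathcal A$, $\mathcal A_\le$ and a bijection $\mu:A\to L(\mathcal A)$ such that $\mathcal A_\le$ accepts exactly the convolutions $\otimes(\mu(a),\mu(b))$ with $a\le b$. *)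

theory Defs
  imports Main
begin

text \<open>A Sigma-tree t : D -> Sigma with D a finite prefix-closed subset of {0,1}^*
  is represented as a partial map from bool lists (False = 0, True = 1) to labels;
  D = dom t.\<close>

type_synonym 'a tree = "bool list \<Rightarrow> 'a option"

definition is_tree :: "'a tree \<Rightarrow> bool" where
  "is_tree t \<longleftrightarrow> finite (dom t) \<and> (\<forall>u v. u @ v \<in> dom t \<longrightarrow> u \<in> dom t)"

text \<open>Convolution of two trees; the padding symbol Box is represented by None.\<close>

definition conv :: "'a tree \<Rightarrow> 'b tree \<Rightarrow> ('a option \<times> 'b option) tree" where
  "conv t1 t2 u = (if u \<in> dom t1 \<union> dom t2 then Some (t1 u, t2 u) else None)"

datatype ('s, 'q) ta =
  TA (states: "'q set") (init: 'q) (delta: "'s \<Rightarrow> 'q \<Rightarrow> 'q \<Rightarrow> 'q") (final: "'q set")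

definition wf_ta :: "('s, 'q) ta \<Rightarrow> bool" where
  "wf_ta A \<longleftrightarrow> finite (states A) \<and> init A \<in> states A \<and> final A \<subseteq> states A \<and>
     (\<forall>a. \<forall>p\<in>states A. \<forall>q\<in>states A. delta A a p q \<in> states A)"

definition is_run :: "('s, 'q) ta \<Rightarrow> 's tree \<Rightarrow> (bool list \<Rightarrow> 'q) \<Rightarrow> bool" where
  "is_run A t \<rho> \<longleftrightarrow>
     (\<forall>u. u \<notin> dom t \<longrightarrow> \<rho> u = init A) \<and>
     (\<forall>u a. t u = Some a \<longrightarrow> \<rho> u = delta A a (\<rho> (u @ [False])) (\<rho> (u @ [True])))"

definition accepts :: "('s, 'q) ta \<Rightarrow> 's tree \<Rightarrow> bool" where
  "accepts A t \<longleftrightarrow> (\<exists>\<rho>. is_run A t \<rho> \<and> \<rho> [] \<in> final A)"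

definition lang :: "('s, 'q) ta \<Rightarrow> 's tree set" where
  "lang A = {t. is_tree t \<and> accepts A t}"

text \<open>A linear order is given as a relation le (a set of pairs) with carrier Field le.\<close>

definition tree_automatic_presentation ::
  "('e \<times> 'e) set \<Rightarrow> ('s, 'q) ta \<Rightarrow> ('s option \<times> 's option, 'q) ta \<Rightarrow> ('e \<Rightarrow> 's tree) \<Rightarrow> bool" where
  "tree_automatic_presentation le A Ale \<mu> \<longleftrightarrow>
     wf_ta A \<and> wf_ta Ale \<and>
     bij_betw \<mu> (Field le) (lang A) \<and>
     lang Ale = {conv (\<mu> a) (\<mu> b) | a b. (a, b) \<in> le}"

text \<open>Ordinal exponentiation with base omega (as in the standard construction,
  cf. oexp in HOL-Cardinals): omega^r is the set of finitely supported functions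
  Field r -> nat, ordered by comparing values at the r-largest point of difference.\<close>

definition fin_supp :: "'a set \<Rightarrow> ('a \<Rightarrow> nat) \<Rightarrow> bool" where
  "fin_supp X f \<longleftrightarrow> (\<forall>x. x \<notin> X \<longrightarrow> f x = 0) \<and> finite {x. f x \<noteq> 0}"

definition omega_exp :: "('a \<times> 'a) set \<Rightarrow> (('a \<Rightarrow> nat) \<times> ('a \<Rightarrow> nat)) set" where
  "omega_exp r = {(f, g). fin_supp (Field r) f \<and> fin_supp (Field r) g \<and>
      (f = g \<or> (\<exists>a\<in>Field r. f a < g a \<and>
                  (\<forall>b\<in>Field r. (a, b) \<in> r \<and> b \<noteq> a \<longrightarrow> f b = g b)))}"

definition fin_ord :: "nat \<Rightarrow> (nat \<times> nat) set" where
  "fin_ord k = {(i, j). i \<le> j \<and> j < k}"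

definition omega_omega_pow :: "nat \<Rightarrow> (((nat \<Rightarrow> nat) \<Rightarrow> nat) \<times> ((nat \<Rightarrow> nat) \<Rightarrow> nat)) set" where
  "omega_omega_pow k = omega_exp (omega_exp (fin_ord k))"

end

theory Submission
  imports Defs "HOL-Library.Sublist" "HOL-Library.List_Lexorder"
begin



definition tdepth :: "'a tree \<Rightarrow> nat" where "tdepth t = Suc (Max (length ` dom t))"

function crun :: "('s,'q) ta \<Rightarrow> 's tree \<Rightarrow> bool list \<Rightarrow> 'q" where
"crun A t u = (if u \<in> dom t \<and> length u < tdepth t
   then delta A (the (t u)) (crun A t (u @ [False])) (crun A t (u @ [True])) else init A)"
  by pat_completeness auto
termination by (relation "measure (\<lambda>(A,t,u). tdepth t - length u)") auto

declare crun.simps[simp del]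

lemma tdepth: "finite (dom t) \<Longrightarrow> u \<in> dom t \<Longrightarrow> length u < tdepth t"
  unfolding tdepth_def by (simp add: le_imp_less_Suc)

lemma crun_in: "is_tree t \<Longrightarrow> u \<in> dom t \<Longrightarrow>
  crun A t u = delta A (the (t u)) (crun A t (u @ [False])) (crun A t (u @ [True]))"
  by (subst crun.simps) (auto simp: is_tree_def tdepth)

lemma crun_guard: "\<not> (u \<in> dom t \<and> length u < tdepth t) \<Longrightarrow> crun A t u = init A"
  by (subst crun.simps) auto

lemma crun_out: "u \<notin> dom t \<Longrightarrow> crun A t u = init A"
  by (subst crun.simps) auto

lemma crun_run: "is_tree t \<Longrightarrow> is_run A t (crun A t)"
  unfolding is_run_def
proof (intro conjI allI impI)
  fix u assume "u \<notin> dom t" then show "crun A t u = init A" by (rule crun_out)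
next
  fix u a assume "is_tree t" "t u = Some a"
  then show "crun A t u = delta A a (crun A t (u @ [False])) (crun A t (u @ [True]))"
    using crun_in[of t u A] by auto
qed

lemma run_unique: "is_tree t \<Longrightarrow> is_run A t \<rho> \<Longrightarrow> \<rho> u = crun A t u"
proof (induction A t u rule: crun.induct)
  case (1 A t u)
  show ?case
  proof (cases "u \<in> dom t")
    case True
    then obtain a where a: "t u = Some a" by auto
    have g: "u \<in> dom t \<and> length u < tdepth t" using True 1(3) tdepth is_tree_def by blast
    have r: "\<rho> u = delta A a (\<rho> (u @ [False])) (\<rho> (u @ [True]))"
      using 1(4) a unfolding is_run_def by blast
    have l: "\<rho> (u @ [False]) = crun A t (u @ [False])" using 1(1)[OF g 1(3) 1(4)] .
    have rr: "\<rho> (u @ [True]) = crun A t (u @ [True])" using 1(2)[OF g 1(3) 1(4)] .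
    show ?thesis unfolding r crun_in[OF 1(3) True] a l rr by simp
  next
    case False
    then show ?thesis using 1(4) crun_out[OF False, where A=A] unfolding is_run_def by auto
  qed
qed

lemma accepts_crun: "is_tree t \<Longrightarrow> accepts A t \<longleftrightarrow> crun A t [] \<in> final A"
  unfolding accepts_def using run_unique crun_run by metis

lemma crun_states: "wf_ta A \<Longrightarrow> crun A t u \<in> states A"
proof (induction A t u rule: crun.induct)
  case (1 A t u)
  then show ?case
  proof (cases "u \<in> dom t \<and> length u < tdepth t")
    case True
    have e2: "crun A t u = delta A (the (t u)) (crun A t (u @ [False])) (crun A t (u @ [True]))"
      using True by (subst crun.simps) simp
    show ?thesis unfolding e2 using 1 True unfolding wf_ta_def by blast
  next
    case False
    then show ?thesis using crun_guard[OF False, where A=A] 1(3) unfolding wf_ta_def by simp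
  qed
qed

definition natify :: "('q \<Rightarrow> nat) \<Rightarrow> ('s,'q) ta \<Rightarrow> ('s, nat) ta" where
  "natify f A = TA (f ` states A) (f (init A))
     (\<lambda>a p q. f (delta A a (inv_into (states A) f p) (inv_into (states A) f q))) (f ` final A)"

lemma natify_crun:
  assumes "wf_ta A" "inj_on f (states A)"
  shows "crun (natify f A) t u = f (crun A t u)"
proof (induction "natify f A" t u rule: crun.induct)
  case (1 t u)
  show ?case
  proof (cases "u \<in> dom t \<and> length u < tdepth t")
    case True
    have e1: "crun (natify f A) t u = delta (natify f A) (the (t u)) (crun (natify f A) t (u @ [False])) (crun (natify f A) t (u @ [True]))"
      using True by (subst crun.simps) simp
    have e2: "crun A t u = delta A (the (t u)) (crun A t (u @ [False])) (crun A t (u @ [True]))"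
      using True by (subst crun.simps) simp
    have i1: "inv_into (states A) f (f (crun A t v)) = crun A t v" for v
      using inv_into_f_f[OF assms(2) crun_states[OF assms(1)]] .
    have d: "delta (natify f A) a p q = f (delta A a (inv_into (states A) f p) (inv_into (states A) f q))" for a p q
      by (simp add: natify_def)
    show ?thesis unfolding e1 e2 d 1(1)[OF True] 1(2)[OF True] i1 ..
  next
    case False
    have "init (natify f A) = f (init A)" by (simp add: natify_def)
    then show ?thesis using crun_guard[OF False, where A=A] crun_guard[OF False, where A="natify f A"] by simp
  qed
qed

lemma natify:
  assumes "wf_ta (A :: ('s,'q) ta)"
  shows "\<exists>B :: ('s, nat) ta. wf_ta B \<and> lang B = lang A"
proof -
  have fin: "finite (states A)" using assms wf_ta_def by blast
  obtain f :: "'q \<Rightarrow> nat" and n where f: "inj_on f (states A)"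
    using finite_imp_inj_to_nat_seg[OF fin] by blast
  have st: "states (natify f A) = f ` states A" "init (natify f A) = f (init A)"
    "final (natify f A) = f ` final A"
    "delta (natify f A) a p q = f (delta A a (inv_into (states A) f p) (inv_into (states A) f q))" for a p q
    by (simp_all add: natify_def)
  have w: "finite (states A)" "init A \<in> states A" "final A \<subseteq> states A"
     "\<And>a p q. p \<in> states A \<Longrightarrow> q \<in> states A \<Longrightarrow> delta A a p q \<in> states A"
    using assms unfolding wf_ta_def by auto
  have "wf_ta (natify f A)" unfolding wf_ta_def st
  proof (intro conjI ballI allI)
    show "finite (f ` states A)" using w by simp
    show "f (init A) \<in> f ` states A" using w by simp
    show "f ` final A \<subseteq> f ` states A" using w by auto
    fix a p q assume "p \<in> f ` states A" "q \<in> f ` states A"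
    then show "f (delta A a (inv_into (states A) f p) (inv_into (states A) f q)) \<in> f ` states A"
    proof -
      have "inv_into (states A) f p \<in> states A" "inv_into (states A) f q \<in> states A"
        using \<open>p \<in> f ` states A\<close> \<open>q \<in> f ` states A\<close> by (auto intro: inv_into_into)
      then show ?thesis using w(4) by blast
    qed
  qed
  moreover have "lang (natify f A) = lang A"
  proof -
    have "crun (natify f A) t [] \<in> final (natify f A) \<longleftrightarrow> crun A t [] \<in> final A" for t
    proof -
      have "crun (natify f A) t [] = f (crun A t [])" by (rule natify_crun[OF assms f])
      then show ?thesis unfolding st using inj_on_image_mem_iff[OF f crun_states[OF assms] w(3)] by simp
    qed
    then show ?thesis unfolding lang_def using accepts_crun[of _ A] accepts_crun[of _ "natify f A"] by auto
  qed
  ultimately show ?thesis by blast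
qed




definition tr :: "bool list set \<Rightarrow> unit tree" where
  "tr S u = (if u \<in> S then Some () else None)"

definition sub :: "bool list set \<Rightarrow> bool list \<Rightarrow> bool list set" where
  "sub S u = {v. u @ v \<in> S}"

definition path' :: "nat list \<Rightarrow> bool list" where
  "path' xs = concat (map (\<lambda>n. replicate n True @ [False]) xs)"

lemma path'_simps[simp]: "path' [] = []" "path' (x # xs) = replicate x True @ False # path' xs"
  by (auto simp: path'_def)

definition Adm :: "nat \<Rightarrow> (nat list \<Rightarrow> nat) \<Rightarrow> bool" where
  "Adm d H \<longleftrightarrow> (\<forall>xs. length xs \<noteq> d \<longrightarrow> H xs = 0) \<and> finite {xs. H xs \<noteq> 0}"

definition enc :: "nat \<Rightarrow> (nat list \<Rightarrow> nat) \<Rightarrow> bool list set" where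
  "enc d H = {u. \<exists>xs. length xs = d \<and> 0 < H xs \<and> prefix u (path' xs @ replicate (H xs - 1) False)}"

definition V :: "nat \<Rightarrow> bool list set set" where
  "V d = enc d ` Collect (Adm d)"

lemma dom_tr[simp]: "dom (tr S) = S"
  by (auto simp: tr_def split: if_splits)

lemma is_tree_tr: "is_tree (tr S) \<longleftrightarrow> finite S \<and> (\<forall>u v. u @ v \<in> S \<longrightarrow> u \<in> S)"
  by (simp add: is_tree_def)

lemma enc_finite: assumes "Adm d H" shows "finite (enc d H)"
proof -
  have "enc d H \<subseteq> (\<Union>xs\<in>{xs. H xs \<noteq> 0}. set (prefixes (path' xs @ replicate (H xs - 1) False)))"
    unfolding enc_def by auto
  moreover have "finite {xs. H xs \<noteq> 0}" using assms Adm_def by blast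
  ultimately show ?thesis by (meson finite_UN_I finite_set finite_subset)
qed

lemma enc_closed: "u @ v \<in> enc d H \<Longrightarrow> u \<in> enc d H"
  unfolding enc_def by (auto dest: append_prefixD)

lemma is_tree_enc: "Adm d H \<Longrightarrow> is_tree (tr (enc d H))"
  unfolding is_tree_tr using enc_finite enc_closed by blast

lemma enc_Nil: "[] \<in> enc d H \<longleftrightarrow> (\<exists>xs. length xs = d \<and> 0 < H xs)"
  unfolding enc_def by auto

lemma enc_ne_Nil: "enc d H \<noteq> {} \<Longrightarrow> [] \<in> enc d H"
  unfolding enc_def by auto

lemma Adm_zero: "Adm d H \<Longrightarrow> \<not> (\<exists>xs. length xs = d \<and> 0 < H xs) \<Longrightarrow> H = (\<lambda>_. 0)"
  unfolding Adm_def by (metis gr0I)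

lemma enc_empty_iff: "Adm d H \<Longrightarrow> enc d H = {} \<longleftrightarrow> H = (\<lambda>_. 0)"
  using Adm_zero enc_Nil enc_ne_Nil by (metis empty_iff less_numeral_extra(3))

lemma enc_zero[simp]: "enc d (\<lambda>_. 0) = {}"
  unfolding enc_def by auto

lemma Adm_zero'[simp]: "Adm d (\<lambda>_. 0)"
  unfolding Adm_def by auto

lemma V_empty: "{} \<in> V d"
  unfolding V_def using enc_zero Adm_zero' by blast

lemma V_noroot: "S \<in> V d \<Longrightarrow> [] \<notin> S \<Longrightarrow> S = {}"
  unfolding V_def using enc_ne_Nil by blast

lemma V_tree: "S \<in> V d \<Longrightarrow> is_tree (tr S)"
  unfolding V_def using is_tree_enc by blast

lemma decomp: "[] \<in> S \<Longrightarrow> S = insert [] (Cons False ` sub S [False] \<union> Cons True ` sub S [True])"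
  unfolding sub_def
proof (intro equalityI subsetI)
  fix x assume "[] \<in> S" "x \<in> S"
  then show "x \<in> insert [] (Cons False ` {v. [False] @ v \<in> S} \<union> Cons True ` {v. [True] @ v \<in> S})"
  proof (cases x)
    case (Cons b w) then show ?thesis using \<open>x \<in> S\<close> by (cases b) auto
  qed auto
qed auto

lemma sub_eq: "[] \<in> S \<Longrightarrow> [] \<in> T \<Longrightarrow> sub S [False] = sub T [False] \<Longrightarrow>
   sub S [True] = sub T [True] \<Longrightarrow> S = T"
  using decomp by metis

lemma sub_sub: "sub (sub S u) [b] = sub S (u @ [b])"
  unfolding sub_def by auto

lemma sub_Nil_mem: "[] \<in> sub S u \<longleftrightarrow> u \<in> S"
  unfolding sub_def by auto

definition dec0 :: "(nat list \<Rightarrow> nat) \<Rightarrow> nat list \<Rightarrow> nat" where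
  "dec0 H = (\<lambda>xs. if xs = [] then H [] - 1 else 0)"

lemma prefix_rep_False: "prefix (b # u) (replicate n False) \<longleftrightarrow> \<not> b \<and> 0 < n \<and> prefix u (replicate (n - 1) False)"
  by (cases n) auto

lemma sub_enc0_F: "0 < H [] \<Longrightarrow> sub (enc 0 H) [False] = enc 0 (dec0 H)"
  unfolding sub_def enc_def dec0_def by (auto simp: prefix_rep_False)

lemma sub_enc0_T: "sub (enc 0 H) [True] = {}"
  unfolding sub_def enc_def by (auto simp: prefix_rep_False)

lemma Adm_dec0: "Adm 0 (dec0 H)"
  unfolding Adm_def dec0_def
  by (auto intro: finite_subset[of _ "{[]}"])

lemma LV0: assumes "[] \<in> S"
  shows "S \<in> V 0 \<longleftrightarrow> sub S [True] = {} \<and> sub S [False] \<in> V 0"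
proof
  assume "S \<in> V 0"
  then obtain H where H: "Adm 0 H" "S = enc 0 H" unfolding V_def by auto
  have "0 < H []" using assms H enc_Nil by auto
  then show "sub S [True] = {} \<and> sub S [False] \<in> V 0"
    using H sub_enc0_F sub_enc0_T Adm_dec0 unfolding V_def by auto
next
  assume a: "sub S [True] = {} \<and> sub S [False] \<in> V 0"
  then obtain L where L: "Adm 0 L" "sub S [False] = enc 0 L" unfolding V_def by auto
  define H where "H = (\<lambda>xs::nat list. if xs = [] then Suc (L []) else 0)"
  have AH: "Adm 0 H" unfolding Adm_def H_def by (auto intro: finite_subset[of _ "{[]}"])
  have "dec0 H = L" using L(1) unfolding dec0_def H_def Adm_def by auto
  moreover have "[] \<in> enc 0 H" unfolding enc_Nil H_def by auto
  ultimately have "S = enc 0 H" using sub_eq[OF assms] sub_enc0_F[of H] sub_enc0_T[of H] a L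
    by (simp add: H_def)
  then show "S \<in> V 0" using AH unfolding V_def by auto
qed

definition slice :: "(nat list \<Rightarrow> nat) \<Rightarrow> nat list \<Rightarrow> nat" where
  "slice H xs = H (0 # xs)"
definition shift :: "(nat list \<Rightarrow> nat) \<Rightarrow> nat list \<Rightarrow> nat" where
  "shift H xs = (case xs of [] \<Rightarrow> 0 | j # ys \<Rightarrow> H (Suc j # ys))"
definition glue :: "(nat list \<Rightarrow> nat) \<Rightarrow> (nat list \<Rightarrow> nat) \<Rightarrow> nat list \<Rightarrow> nat" where
  "glue L R xs = (case xs of [] \<Rightarrow> 0 | j # ys \<Rightarrow> (case j of 0 \<Rightarrow> L ys | Suc i \<Rightarrow> R (i # ys)))"

lemma Adm_slice: "Adm (Suc d) H \<Longrightarrow> Adm d (slice H)"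
  unfolding Adm_def slice_def
  apply (auto)
  apply (rule finite_subset[of _ "tl ` {xs. H xs \<noteq> 0}"])
   apply (auto simp: image_iff)
  by (metis list.sel(3))

lemma Adm_shift: assumes "Adm (Suc d) H" shows "Adm (Suc d) (shift H)"
proof -
  have "{xs. shift H xs \<noteq> 0} \<subseteq> (\<lambda>xs. case xs of [] \<Rightarrow> [] | j # ys \<Rightarrow> (j - 1) # ys) ` {xs. H xs \<noteq> 0}"
  proof
    fix xs assume "xs \<in> {xs. shift H xs \<noteq> 0}"
    then obtain j ys where "xs = j # ys" "H (Suc j # ys) \<noteq> 0" by (cases xs) (auto simp: shift_def)
    then show "xs \<in> (\<lambda>xs. case xs of [] \<Rightarrow> [] | j # ys \<Rightarrow> (j - 1) # ys) ` {xs. H xs \<noteq> 0}"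
      by (intro image_eqI[of _ _ "Suc j # ys"]) auto
  qed
  moreover have "finite {xs. H xs \<noteq> 0}" using assms Adm_def by blast
  ultimately have "finite {xs. shift H xs \<noteq> 0}" using finite_subset by blast
  moreover have "\<forall>xs. length xs \<noteq> Suc d \<longrightarrow> shift H xs = 0"
    using assms unfolding Adm_def shift_def by (auto split: list.splits)
  ultimately show ?thesis unfolding Adm_def by blast
qed

lemma Adm_glue: assumes "Adm d L" "Adm (Suc d) R" shows "Adm (Suc d) (glue L R)"
proof -
  have "{xs. glue L R xs \<noteq> 0} \<subseteq> Cons 0 ` {xs. L xs \<noteq> 0} \<union> (\<lambda>xs. case xs of [] \<Rightarrow> [] | j # ys \<Rightarrow> Suc j # ys) ` {xs. R xs \<noteq> 0}"
  proof
    fix xs assume a: "xs \<in> {xs. glue L R xs \<noteq> 0}"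
    then obtain j ys where js: "xs = j # ys" by (cases xs) (auto simp: glue_def)
    show "xs \<in> Cons 0 ` {xs. L xs \<noteq> 0} \<union> (\<lambda>xs. case xs of [] \<Rightarrow> [] | j # ys \<Rightarrow> Suc j # ys) ` {xs. R xs \<noteq> 0}"
    proof (cases j)
      case 0 then show ?thesis using a js by (auto simp: glue_def)
    next
      case (Suc i) then show ?thesis using a js
        by (intro UnI2 image_eqI[of _ _ "i # ys"]) (auto simp: glue_def)
    qed
  qed
  moreover have "finite {xs. L xs \<noteq> 0}" "finite {xs. R xs \<noteq> 0}" using assms Adm_def by blast+
  ultimately have "finite {xs. glue L R xs \<noteq> 0}" using finite_subset by blast
  moreover have "\<forall>xs. length xs \<noteq> Suc d \<longrightarrow> glue L R xs = 0"
    using assms unfolding Adm_def glue_def by (auto split: list.splits nat.splits)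
  ultimately show ?thesis unfolding Adm_def by blast
qed

lemma slice_glue: "slice (glue L R) = L"
  unfolding slice_def glue_def by auto

lemma shift_glue: "Adm (Suc d) R \<Longrightarrow> shift (glue L R) = R"
  unfolding shift_def glue_def Adm_def by (auto split: list.splits)

lemma glue_slice_shift: "Adm (Suc d) H \<Longrightarrow> glue (slice H) (shift H) = H"
  unfolding shift_def glue_def slice_def Adm_def by (auto split: list.splits nat.splits)

lemma prefix_path_Cons:
  "prefix (b # u) (path' (j # zs) @ w) \<longleftrightarrow>
    (if b then (\<exists>i. j = Suc i \<and> prefix u (path' (i # zs) @ w)) else j = 0 \<and> prefix u (path' zs @ w))"
  by (cases j) auto

lemma sub_encS_F: "sub (enc (Suc d) H) [False] = enc d (slice H)"
proof -
  have "u \<in> sub (enc (Suc d) H) [False] \<longleftrightarrow> u \<in> enc d (slice H)" for u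
  proof
    assume "u \<in> sub (enc (Suc d) H) [False]"
    then obtain xs where xs: "length xs = Suc d" "0 < H xs" "prefix (False # u) (path' xs @ replicate (H xs - 1) False)"
      unfolding sub_def enc_def by auto
    then obtain j zs where "xs = j # zs" by (cases xs) auto
    then show "u \<in> enc d (slice H)" using xs unfolding enc_def slice_def
      by (simp only: prefix_path_Cons) auto
  next
    assume "u \<in> enc d (slice H)"
    then obtain zs where "length zs = d" "0 < H (0 # zs)" "prefix u (path' zs @ replicate (H (0 # zs) - 1) False)"
      unfolding enc_def slice_def by auto
    then show "u \<in> sub (enc (Suc d) H) [False]" unfolding sub_def enc_def
      by (intro CollectI exI[of _ "0 # zs"]) auto
  qed
  then show ?thesis by blast
qed

lemma sub_encS_T: "sub (enc (Suc d) H) [True] = enc (Suc d) (shift H)"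
proof -
  have "u \<in> sub (enc (Suc d) H) [True] \<longleftrightarrow> u \<in> enc (Suc d) (shift H)" for u
  proof
    assume "u \<in> sub (enc (Suc d) H) [True]"
    then obtain xs where xs: "length xs = Suc d" "0 < H xs" "prefix (True # u) (path' xs @ replicate (H xs - 1) False)"
      unfolding sub_def enc_def by auto
    then obtain j zs where js: "xs = j # zs" by (cases xs) auto
    then obtain i where "j = Suc i" "prefix u (path' (i # zs) @ replicate (H xs - 1) False)"
      using xs(3) by (simp only: prefix_path_Cons) auto
    then show "u \<in> enc (Suc d) (shift H)" using xs js unfolding enc_def shift_def
      by (intro CollectI exI[of _ "i # zs"]) auto
  next
    assume "u \<in> enc (Suc d) (shift H)"
    then obtain xs where xs: "length xs = Suc d" "0 < shift H xs" "prefix u (path' xs @ replicate (shift H xs - 1) False)"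
      unfolding enc_def by auto
    then obtain i zs where js: "xs = i # zs" by (cases xs) auto
    then show "u \<in> sub (enc (Suc d) H) [True]" using xs unfolding sub_def enc_def shift_def
      by (intro CollectI exI[of _ "Suc i # zs"]) auto
  qed
  then show ?thesis by blast
qed

lemma LVS: assumes "[] \<in> S"
  shows "S \<in> V (Suc d) \<longleftrightarrow> sub S [False] \<in> V d \<and> sub S [True] \<in> V (Suc d) \<and>
            (sub S [False] \<noteq> {} \<or> sub S [True] \<noteq> {})"
proof
  assume "S \<in> V (Suc d)"
  then obtain H where H: "Adm (Suc d) H" "S = enc (Suc d) H" unfolding V_def by auto
  obtain xs where xs: "length xs = Suc d" "0 < H xs" using assms H enc_Nil by auto
  then obtain j zs where js: "xs = j # zs" by (cases xs) auto
  have ne: "sub S [False] \<noteq> {} \<or> sub S [True] \<noteq> {}"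
  proof (cases j)
    case 0
    then have "[] \<in> enc d (slice H)" using xs js unfolding enc_Nil slice_def by auto
    then show ?thesis using H sub_encS_F by auto
  next
    case (Suc i)
    then have "[] \<in> enc (Suc d) (shift H)" using xs js unfolding enc_Nil shift_def
      by (intro exI[of _ "i # zs"]) auto
    then show ?thesis using H sub_encS_T by auto
  qed
  show "sub S [False] \<in> V d \<and> sub S [True] \<in> V (Suc d) \<and> (sub S [False] \<noteq> {} \<or> sub S [True] \<noteq> {})"
    using H sub_encS_F sub_encS_T Adm_slice Adm_shift ne unfolding V_def by auto
next
  assume a: "sub S [False] \<in> V d \<and> sub S [True] \<in> V (Suc d) \<and> (sub S [False] \<noteq> {} \<or> sub S [True] \<noteq> {})"
  then obtain L R where LR: "Adm d L" "sub S [False] = enc d L" "Adm (Suc d) R" "sub S [True] = enc (Suc d) R"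
    unfolding V_def by auto
  define H where "H = glue L R"
  have AH: "Adm (Suc d) H" using Adm_glue LR H_def by auto
  have "[] \<in> enc (Suc d) H"
  proof (cases "sub S [False] \<noteq> {}")
    case True
    then obtain xs where "length xs = d" "0 < L xs" using LR enc_Nil enc_ne_Nil by metis
    then show ?thesis unfolding enc_Nil H_def glue_def by (intro exI[of _ "0 # xs"]) auto
  next
    case False
    then have "sub S [True] \<noteq> {}" using a by auto
    then obtain xs where xs: "length xs = Suc d" "0 < R xs" using LR enc_Nil enc_ne_Nil by metis
    then obtain i zs where "xs = i # zs" by (cases xs) auto
    then show ?thesis using xs unfolding enc_Nil H_def glue_def by (intro exI[of _ "Suc i # zs"]) auto
  qed
  then have "S = enc (Suc d) H" using sub_eq[OF assms] sub_encS_F[of d H] sub_encS_T[of d H] LR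
      slice_glue shift_glue H_def by metis
  then show "S \<in> V (Suc d)" using AH unfolding V_def by auto
qed

lemma prefix_rep_T:
  "prefix (replicate x True @ False # a) (replicate y True @ False # b) \<Longrightarrow> x = y \<and> prefix a b"
proof (induction x arbitrary: y)
  case 0 then show ?case by (cases y) auto
next
  case (Suc x) then show ?case by (cases y) auto
qed

lemma path_prefix:
  "length xs = length ys \<Longrightarrow> prefix (path' xs @ w) (path' ys @ w') \<Longrightarrow> xs = ys \<and> prefix w w'"
proof (induction xs arbitrary: ys)
  case Nil then show ?case by auto
next
  case (Cons x xs)
  then obtain y ys' where ys: "ys = y # ys'" by (cases ys) auto
  show ?case using Cons prefix_rep_T[of x "path' xs @ w" y "path' ys' @ w'"] ys by auto
qed

lemma enc_mem: "length xs = d \<Longrightarrow> path' xs @ replicate i False \<in> enc d H \<longleftrightarrow> i < H xs"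
proof
  assume l: "length xs = d" and "path' xs @ replicate i False \<in> enc d H"
  then obtain ys where ys: "length ys = d" "0 < H ys" "prefix (path' xs @ replicate i False) (path' ys @ replicate (H ys - 1) False)"
    unfolding enc_def by auto
  then have "xs = ys" "prefix (replicate i False) (replicate (H ys - 1) False)" using path_prefix l by metis+
  then show "i < H xs" using ys prefix_length_le by fastforce
next
  assume "length xs = d" "i < H xs"
  then show "path' xs @ replicate i False \<in> enc d H" unfolding enc_def
    by (intro CollectI exI[of _ xs]) (auto simp: prefix_def replicate_add[symmetric] intro: exI[of _ "replicate (H xs - 1 - i) False"])
qed

lemma enc_inj: assumes "Adm d H1" "Adm d H2" "enc d H1 = enc d H2" shows "H1 = H2"
proof
  fix xs
  show "H1 xs = H2 xs"
  proof (cases "length xs = d")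
    case True
    then have "\<forall>i. i < H1 xs \<longleftrightarrow> i < H2 xs" using enc_mem assms(3) by metis
    then show ?thesis by (meson less_irrefl_nat nat_neq_iff)
  next
    case False then show ?thesis using assms unfolding Adm_def by auto
  qed
qed




definition lessH :: "nat \<Rightarrow> (nat list \<Rightarrow> nat) \<Rightarrow> (nat list \<Rightarrow> nat) \<Rightarrow> bool" where
  "lessH d H1 H2 \<longleftrightarrow> (\<exists>xs. length xs = d \<and> H1 xs < H2 xs \<and>
      (\<forall>ys. length ys = d \<and> xs < ys \<longrightarrow> H1 ys = H2 ys))"

definition cmpH :: "nat \<Rightarrow> (nat list \<Rightarrow> nat) \<Rightarrow> (nat list \<Rightarrow> nat) \<Rightarrow> nat" where
  "cmpH d H1 H2 = (if H1 = H2 then 1 else if lessH d H1 H2 then 0 else 2)"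

lemma lessH_total:
  assumes "Adm d H1" "Adm d H2" "H1 \<noteq> H2"
  shows "lessH d H1 H2 \<or> lessH d H2 H1"
proof -
  let ?D = "{xs. H1 xs \<noteq> H2 xs}"
  have "?D \<subseteq> {xs. H1 xs \<noteq> 0} \<union> {xs. H2 xs \<noteq> 0}" by auto
  then have fin: "finite ?D" using assms unfolding Adm_def by (meson finite_Un finite_subset)
  have ne: "?D \<noteq> {}" using assms(3) by auto
  define m where "m = Max ?D"
  have mD: "m \<in> ?D" using Max_in[OF fin ne] m_def by simp
  have lm: "length m = d" using mD assms unfolding Adm_def by auto
  have up: "\<forall>ys. length ys = d \<and> m < ys \<longrightarrow> H1 ys = H2 ys"
  proof (intro allI impI)
    fix ys assume "length ys = d \<and> m < ys"
    then have "ys \<notin> ?D" using Max_ge[OF fin] m_def by (meson leD)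
    then show "H1 ys = H2 ys" by simp
  qed
  show ?thesis
  proof (cases "H1 m < H2 m")
    case True then show ?thesis unfolding lessH_def using lm up by blast
  next
    case False
    then have "H2 m < H1 m" using mD by auto
    then show ?thesis unfolding lessH_def using lm up by (metis)
  qed
qed

lemma cmpH_zero_left: "Adm d H \<Longrightarrow> H \<noteq> (\<lambda>_. 0) \<Longrightarrow> cmpH d (\<lambda>_. 0) H = 0"
  unfolding cmpH_def using lessH_total[of d "\<lambda>_. 0" H] by (auto simp: lessH_def)

lemma cmpH_zero_right: "H \<noteq> (\<lambda>_. 0) \<Longrightarrow> cmpH d H (\<lambda>_. 0) = 2"
  unfolding cmpH_def by (auto simp: lessH_def)

lemma cmpH_refl: "cmpH d H H = 1"
  unfolding cmpH_def by simp

lemma H_split: "Adm (Suc d) H1 \<Longrightarrow> Adm (Suc d) H2 \<Longrightarrow>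
   H1 = H2 \<longleftrightarrow> slice H1 = slice H2 \<and> shift H1 = shift H2"
  using glue_slice_shift by metis

lemma lessH_shift:
  assumes "Adm (Suc d) H1" "Adm (Suc d) H2" "shift H1 \<noteq> shift H2"
  shows "lessH (Suc d) H1 H2 \<longleftrightarrow> lessH (Suc d) (shift H1) (shift H2)"
proof
  assume "lessH (Suc d) H1 H2"
  then obtain xs where xs: "length xs = Suc d" "H1 xs < H2 xs"
    "\<forall>ys. length ys = Suc d \<and> xs < ys \<longrightarrow> H1 ys = H2 ys" unfolding lessH_def by blast
  then obtain j zs where js: "xs = j # zs" by (cases xs) auto
  show "lessH (Suc d) (shift H1) (shift H2)"
  proof (cases j)
    case 0
    have "shift H1 = shift H2"
    proof
      fix ys show "shift H1 ys = shift H2 ys"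
      proof (cases ys)
        case Nil then show ?thesis by (simp add: shift_def)
      next
        case (Cons i ws)
        show ?thesis
        proof (cases "length ws = d")
          case True
          then show ?thesis using xs(3)[rule_format, of "Suc i # ws"] js 0 Cons by (simp add: shift_def)
        next
          case False
          then show ?thesis using assms Cons unfolding Adm_def shift_def by simp
        qed
      qed
    qed
    then show ?thesis using assms(3) by simp
  next
    case (Suc i)
    show ?thesis unfolding lessH_def
    proof (intro exI[of _ "i # zs"] conjI allI impI)
      show "length (i # zs) = Suc d" using xs js by simp
      show "shift H1 (i # zs) < shift H2 (i # zs)" using xs js Suc by (simp add: shift_def)
      fix ys assume ys: "length ys = Suc d \<and> i # zs < ys"
      then obtain i' ws where "ys = i' # ws" by (cases ys) auto
      then show "shift H1 ys = shift H2 ys" using xs(3)[rule_format, of "Suc i' # ws"] ys js Suc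
        by (auto simp: shift_def)
    qed
  qed
next
  assume "lessH (Suc d) (shift H1) (shift H2)"
  then obtain xs where xs: "length xs = Suc d" "shift H1 xs < shift H2 xs"
    "\<forall>ys. length ys = Suc d \<and> xs < ys \<longrightarrow> shift H1 ys = shift H2 ys" unfolding lessH_def by blast
  then obtain j zs where js: "xs = j # zs" by (cases xs) auto
  show "lessH (Suc d) H1 H2" unfolding lessH_def
  proof (intro exI[of _ "Suc j # zs"] conjI allI impI)
    show "length (Suc j # zs) = Suc d" using xs js by simp
    show "H1 (Suc j # zs) < H2 (Suc j # zs)" using xs js by (simp add: shift_def)
    fix ys assume ys: "length ys = Suc d \<and> Suc j # zs < ys"
    then obtain i ws where iw: "ys = i # ws" by (cases ys) auto
    then obtain i' where "i = Suc i'" using ys by (cases i) auto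
    then show "H1 ys = H2 ys" using xs(3)[rule_format, of "i' # ws"] ys js iw
      by (auto simp: shift_def)
  qed
qed

lemma lessH_slice:
  assumes "Adm (Suc d) H1" "Adm (Suc d) H2" "shift H1 = shift H2"
  shows "lessH (Suc d) H1 H2 \<longleftrightarrow> lessH d (slice H1) (slice H2)"
proof
  assume "lessH (Suc d) H1 H2"
  then obtain xs where xs: "length xs = Suc d" "H1 xs < H2 xs"
    "\<forall>ys. length ys = Suc d \<and> xs < ys \<longrightarrow> H1 ys = H2 ys" unfolding lessH_def by blast
  then obtain j zs where js: "xs = j # zs" by (cases xs) auto
  have j0: "j = 0"
  proof (rule ccontr)
    assume "j \<noteq> 0"
    then obtain i where "j = Suc i" by (cases j) auto
    then have "H1 xs = H2 xs" using fun_cong[OF assms(3), of "i # zs"] js by (simp add: shift_def)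
    then show False using xs by simp
  qed
  show "lessH d (slice H1) (slice H2)" unfolding lessH_def
  proof (intro exI[of _ zs] conjI allI impI)
    show "length zs = d" using xs js by simp
    show "slice H1 zs < slice H2 zs" using xs js j0 by (simp add: slice_def)
    fix ys assume "length ys = d \<and> zs < ys"
    then show "slice H1 ys = slice H2 ys" using xs(3)[rule_format, of "0 # ys"] js j0 by (simp add: slice_def)
  qed
next
  assume "lessH d (slice H1) (slice H2)"
  then obtain zs where zs: "length zs = d" "slice H1 zs < slice H2 zs"
    "\<forall>ys. length ys = d \<and> zs < ys \<longrightarrow> slice H1 ys = slice H2 ys" unfolding lessH_def by blast
  show "lessH (Suc d) H1 H2" unfolding lessH_def
  proof (intro exI[of _ "0 # zs"] conjI allI impI)
    show "length (0 # zs) = Suc d" using zs by simp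
    show "H1 (0 # zs) < H2 (0 # zs)" using zs by (simp add: slice_def)
    fix ys assume ys: "length ys = Suc d \<and> 0 # zs < ys"
    then obtain i ws where iw: "ys = i # ws" by (cases ys) auto
    show "H1 ys = H2 ys"
    proof (cases i)
      case 0 then show ?thesis using zs(3)[rule_format, of ws] ys iw by (simp add: slice_def)
    next
      case (Suc i') then show ?thesis using fun_cong[OF assms(3), of "i' # ws"] iw by (simp add: shift_def)
    qed
  qed
qed

lemma cmpH_Suc:
  assumes "Adm (Suc d) H1" "Adm (Suc d) H2"
  shows "cmpH (Suc d) H1 H2 = (if cmpH (Suc d) (shift H1) (shift H2) \<noteq> 1
     then cmpH (Suc d) (shift H1) (shift H2) else cmpH d (slice H1) (slice H2))"
proof (cases "shift H1 = shift H2")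
  case True
  then show ?thesis using H_split[OF assms] lessH_slice[OF assms True] unfolding cmpH_def by simp
next
  case False
  then show ?thesis using H_split[OF assms] lessH_shift[OF assms False] unfolding cmpH_def by auto
qed

lemma cmpH_0:
  assumes "Adm 0 H1" "Adm 0 H2" "0 < H1 []" "0 < H2 []"
  shows "cmpH 0 (dec0 H1) (dec0 H2) = cmpH 0 H1 H2"
proof -
  have l: "lessH 0 G1 G2 \<longleftrightarrow> G1 [] < G2 []" for G1 G2 unfolding lessH_def by auto
  have e: "Adm 0 G1 \<Longrightarrow> Adm 0 G2 \<Longrightarrow> G1 = G2 \<longleftrightarrow> G1 [] = G2 []" for G1 G2
    unfolding Adm_def by (metis length_0_conv ext)
  show ?thesis unfolding cmpH_def l using e[OF assms(1,2)] e[OF Adm_dec0 Adm_dec0] assms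
    by (simp add: dec0_def; linarith)
qed




definition stepv :: "nat \<Rightarrow> bool \<times> nat set \<Rightarrow> bool \<times> nat set \<Rightarrow> bool \<times> nat set" where
  "stepv k x y = (True, {d. d \<le> k \<and> ((d = 0 \<and> \<not> fst y \<and> 0 \<in> snd x) \<or>
       (0 < d \<and> d - 1 \<in> snd x \<and> d \<in> snd y \<and> (fst x \<or> fst y)))})"

definition semv :: "nat \<Rightarrow> bool list set \<Rightarrow> bool \<times> nat set" where
  "semv k S = (S \<noteq> {}, {d. d \<le> k \<and> S \<in> V d})"

definition empty0 :: "nat \<Rightarrow> bool \<times> nat set" where "empty0 k = (False, {..k})"

lemma semv_empty: "semv k {} = empty0 k"
  unfolding semv_def empty0_def using V_empty by auto

lemma semv_step: assumes "[] \<in> S"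
  shows "semv k S = stepv k (semv k (sub S [False])) (semv k (sub S [True]))"
proof -
  have "d \<le> k \<and> S \<in> V d \<longleftrightarrow> d \<le> k \<and> ((d = 0 \<and> \<not> (sub S [True] \<noteq> {}) \<and> sub S [False] \<in> V 0) \<or>
       (0 < d \<and> (d - 1 \<le> k \<and> sub S [False] \<in> V (d - 1)) \<and> (d \<le> k \<and> sub S [True] \<in> V d)
        \<and> (sub S [False] \<noteq> {} \<or> sub S [True] \<noteq> {})))" for d
  proof (cases d)
    case 0 then show ?thesis using LV0[OF assms] by auto
  next
    case (Suc d') then show ?thesis using LVS[OF assms, of d'] by auto
  qed
  then show ?thesis unfolding semv_def stepv_def using assms by auto
qed

definition autA :: "nat \<Rightarrow> (unit, bool \<times> nat set) ta" where
  "autA k = TA (UNIV \<times> Pow {..k}) (empty0 k) (\<lambda>_ x y. stepv k x y) {x. x \<in> UNIV \<times> Pow {..k} \<and> k \<in> snd x}"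

lemma wf_autA: "wf_ta (autA k)"
  unfolding wf_ta_def autA_def empty0_def stepv_def by auto

lemma tree_sub_empty: "is_tree t \<Longrightarrow> u \<notin> dom t \<Longrightarrow> sub (dom t) u = {}"
  unfolding is_tree_def sub_def by blast

lemma crun_autA: "is_tree t \<Longrightarrow> crun (autA k) t u = semv k (sub (dom t) u)"
proof (induction "autA k" t u rule: crun.induct)
  case (1 t u)
  show ?case
  proof (cases "u \<in> dom t \<and> length u < tdepth t")
    case True
    have e1: "crun (autA k) t u = stepv k (crun (autA k) t (u @ [False])) (crun (autA k) t (u @ [True]))"
      using True by (subst crun.simps) (simp add: autA_def)
    have "[] \<in> sub (dom t) u" using True sub_Nil_mem by blast
    then show ?thesis unfolding e1 1(1)[OF True 1(3)] 1(2)[OF True 1(3)] using semv_step sub_sub by metis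
  next
    case False
    then have "u \<notin> dom t" using tdepth 1(3) is_tree_def by blast
    then have "sub (dom t) u = {}" using tree_sub_empty 1(3) by blast
    then show ?thesis using crun_guard[OF False, where A="autA k"] semv_empty by (simp add: autA_def)
  qed
qed

lemma unit_tree: "(t :: unit tree) = tr (dom t)"
  by (rule ext) (auto simp: tr_def)

lemma sub_Nil[simp]: "sub S [] = S"
  unfolding sub_def by simp

lemma lang_autA: "lang (autA k) = tr ` V k"
proof (intro equalityI subsetI)
  fix t assume "t \<in> lang (autA k)"
  then have t: "is_tree t" "crun (autA k) t [] \<in> final (autA k)" unfolding lang_def using accepts_crun by blast+
  then have "k \<in> snd (semv k (dom t))" using crun_autA[OF t(1), of k "[]"] by (simp add: autA_def)
  then have "dom t \<in> V k" unfolding semv_def by simp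
  then show "t \<in> tr ` V k" using unit_tree[of t] by blast
next
  fix t assume "t \<in> tr ` V k"
  then obtain S where S: "S \<in> V k" "t = tr S" by blast
  have tt: "is_tree t" using S V_tree by blast
  have "crun (autA k) t [] = semv k S" using crun_autA[OF tt, of k "[]"] S by simp
  moreover have "semv k S \<in> final (autA k)" using S unfolding semv_def autA_def by auto
  ultimately show "t \<in> lang (autA k)" unfolding lang_def using accepts_crun[OF tt, of "autA k"] tt by simp
qed

definition dead :: "bool \<times> nat set" where "dead = (True, {})"

definition stepN :: "nat \<Rightarrow> bool \<times> nat set \<Rightarrow> bool \<times> nat set \<Rightarrow> bool \<times> nat set" where
  "stepN k x y = (if x = empty0 k \<and> y = empty0 k then empty0 k else dead)"

definition compS :: "nat \<Rightarrow> unit option \<Rightarrow> unit option \<Rightarrow> bool \<times> nat set \<Rightarrow> bool \<times> nat set \<Rightarrow> bool \<times> nat set" where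
  "compS k lab oth x y = (case lab of Some _ \<Rightarrow> stepv k x y | None \<Rightarrow> (if oth = None then dead else stepN k x y))"

definition cmpstep :: "unit option \<Rightarrow> unit option \<Rightarrow> nat \<Rightarrow> nat \<Rightarrow> nat" where
  "cmpstep a b cl cr = (case a of Some _ \<Rightarrow> (case b of Some _ \<Rightarrow> (if cr \<noteq> 1 then cr else cl) | None \<Rightarrow> 2)
      | None \<Rightarrow> (case b of Some _ \<Rightarrow> 0 | None \<Rightarrow> 1))"

definition deltaB :: "nat \<Rightarrow> unit option \<times> unit option \<Rightarrow>
   (bool \<times> nat set) \<times> (bool \<times> nat set) \<times> nat \<Rightarrow> (bool \<times> nat set) \<times> (bool \<times> nat set) \<times> nat \<Rightarrow>
   (bool \<times> nat set) \<times> (bool \<times> nat set) \<times> nat" where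
  "deltaB k lab x y = (compS k (fst lab) (snd lab) (fst x) (fst y),
      compS k (snd lab) (fst lab) (fst (snd x)) (fst (snd y)),
      cmpstep (fst lab) (snd lab) (snd (snd x)) (snd (snd y)))"

definition StB :: "nat \<Rightarrow> ((bool \<times> nat set) \<times> (bool \<times> nat set) \<times> nat) set" where
  "StB k = (UNIV \<times> Pow {..k}) \<times> (UNIV \<times> Pow {..k}) \<times> {0,1,2}"

definition autB :: "nat \<Rightarrow> (unit option \<times> unit option, (bool \<times> nat set) \<times> (bool \<times> nat set) \<times> nat) ta" where
  "autB k = TA (StB k) (empty0 k, empty0 k, 1) (deltaB k)
      {x \<in> StB k. k \<in> snd (fst x) \<and> k \<in> snd (fst (snd x)) \<and> snd (snd x) \<noteq> 2}"

lemma compS_in: "compS k lab oth x y \<in> UNIV \<times> Pow {..k}"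
  unfolding compS_def stepv_def stepN_def dead_def empty0_def by (auto split: option.splits)

lemma cmpstep_in: "cl \<in> {0,1,2} \<Longrightarrow> cr \<in> {0,1,2} \<Longrightarrow> cmpstep a b cl cr \<in> {0,1,2::nat}"
  unfolding cmpstep_def by (auto split: option.splits)

lemma wf_autB: "wf_ta (autB k)"
  unfolding wf_ta_def
proof (intro conjI ballI allI)
  show "finite (states (autB k))" unfolding autB_def StB_def by auto
  show "init (autB k) \<in> states (autB k)" unfolding autB_def StB_def empty0_def by auto
  show "final (autB k) \<subseteq> states (autB k)" unfolding autB_def by auto
  fix a p q assume pq: "p \<in> states (autB k)" "q \<in> states (autB k)"
  have sn: "snd (snd p) \<in> {0,1,2}" "snd (snd q) \<in> {0,1,2}" using pq unfolding autB_def StB_def by auto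
  show "delta (autB k) a p q \<in> states (autB k)"
    unfolding autB_def StB_def using compS_in cmpstep_in[OF sn] by (simp add: deltaB_def)
qed

definition subt :: "'a tree \<Rightarrow> bool list \<Rightarrow> 'a tree" where "subt s u = (\<lambda>v. s (u @ v))"
definition P1 :: "(unit option \<times> unit option) tree \<Rightarrow> bool list set" where
  "P1 s = {u. \<exists>x b. s u = Some (Some x, b)}"
definition P2 :: "(unit option \<times> unit option) tree \<Rightarrow> bool list set" where
  "P2 s = {u. \<exists>x a. s u = Some (a, Some x)}"
definition noNN :: "(unit option \<times> unit option) tree \<Rightarrow> bool" where
  "noNN s \<longleftrightarrow> (\<forall>u. s u \<noteq> Some (None, None))"
definition ST :: "nat \<Rightarrow> bool \<Rightarrow> bool list set \<Rightarrow> bool \<times> nat set" where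
  "ST k n S = (if n then semv k S else dead)"

lemma stepv_dead: "x = dead \<or> y = dead \<Longrightarrow> stepv k x y = dead"
  unfolding stepv_def dead_def by auto

lemma dead_ne: "dead \<noteq> empty0 k"
  unfolding dead_def empty0_def by auto

lemma ST_ne: "\<not> n \<Longrightarrow> ST k n S \<noteq> empty0 k"
  unfolding ST_def using dead_ne by auto

lemma comp_abs:
  assumes n: "n \<longleftrightarrow> \<not> (lab = None \<and> oth = None) \<and> nL \<and> nR" and r: "[] \<in> S \<longleftrightarrow> lab \<noteq> None"
  shows "ST k n S = compS k lab oth (ST k nL (sub S [False])) (ST k nR (sub S [True]))"
proof (cases lab)
  case (Some x)
  show ?thesis
  proof (cases "nL \<and> nR")
    case True
    then show ?thesis using n r Some semv_step[of S k] unfolding ST_def compS_def by auto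
  next
    case False
    then show ?thesis using n Some stepv_dead unfolding ST_def compS_def by auto
  qed
next
  case None
  show ?thesis
  proof (cases oth)
    case None2: None
    then show ?thesis using n None unfolding ST_def compS_def by auto
  next
    case (Some y)
    show ?thesis
    proof (cases "nL \<and> nR")
      case False
      then have "ST k n S = dead" using n unfolding ST_def by auto
      moreover have "ST k nL (sub S [False]) \<noteq> empty0 k \<or> ST k nR (sub S [True]) \<noteq> empty0 k"
        using False ST_ne by blast
      ultimately show ?thesis using None Some unfolding compS_def stepN_def by auto
    next
      case True
      have nS: "[] \<notin> S" using r None by simp
      show ?thesis
      proof (cases "S = {}")
        case True2: True
        then have "sub S [False] = {}" "sub S [True] = {}" unfolding sub_def by auto
        then show ?thesis using True True2 n None Some semv_empty unfolding ST_def compS_def stepN_def by auto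
      next
        case False
        then obtain w where w: "w \<in> S" by auto
        then obtain b v where "w = b # v" using nS by (cases w) auto
        then have "sub S [False] \<noteq> {} \<or> sub S [True] \<noteq> {}" using w unfolding sub_def by (cases b) auto
        then have "semv k (sub S [False]) \<noteq> empty0 k \<or> semv k (sub S [True]) \<noteq> empty0 k"
          unfolding semv_def empty0_def by auto
        moreover have "semv k S = dead" using False nS V_noroot unfolding semv_def dead_def by auto
        ultimately show ?thesis using True n None Some unfolding ST_def compS_def stepN_def by auto
      qed
    qed
  qed
qed

lemma enc_Nil_ne: "[] \<in> enc d H \<Longrightarrow> H \<noteq> (\<lambda>_. 0)"
  unfolding enc_Nil by auto

lemma enc_noNil: "Adm d H \<Longrightarrow> [] \<notin> enc d H \<Longrightarrow> H = (\<lambda>_. 0)"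
  using enc_ne_Nil enc_empty_iff by blast

lemma cmp_abs:
  assumes ab: "\<not> (a = None \<and> b = None)"
  and r1: "[] \<in> S1 \<longleftrightarrow> a \<noteq> None" and r2: "[] \<in> S2 \<longleftrightarrow> b \<noteq> None"
  and IHL: "\<And>d H1 H2. Adm d H1 \<Longrightarrow> Adm d H2 \<Longrightarrow> sub S1 [False] = enc d H1 \<Longrightarrow>
               sub S2 [False] = enc d H2 \<Longrightarrow> cl = cmpH d H1 H2"
  and IHR: "\<And>d H1 H2. Adm d H1 \<Longrightarrow> Adm d H2 \<Longrightarrow> sub S1 [True] = enc d H1 \<Longrightarrow>
               sub S2 [True] = enc d H2 \<Longrightarrow> cr = cmpH d H1 H2"
  and H: "Adm d H1" "Adm d H2" "S1 = enc d H1" "S2 = enc d H2"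
  shows "cmpstep a b cl cr = cmpH d H1 H2"
proof (cases a)
  case None
  then obtain y where y: "b = Some y" using ab by auto
  have "H1 = (\<lambda>_. 0)" using enc_noNil H r1 None by blast
  moreover have "H2 \<noteq> (\<lambda>_. 0)" using enc_Nil_ne H r2 y by blast
  ultimately show ?thesis using cmpH_zero_left[OF H(2)] None y unfolding cmpstep_def by simp
next
  case (Some x)
  show ?thesis
  proof (cases b)
    case None
    have "H2 = (\<lambda>_. 0)" using enc_noNil H r2 None by blast
    moreover have "H1 \<noteq> (\<lambda>_. 0)" using enc_Nil_ne H r1 Some by blast
    ultimately show ?thesis using cmpH_zero_right None Some unfolding cmpstep_def by simp
  next
    case (Some y)
    have n1: "[] \<in> enc d H1" "[] \<in> enc d H2" using H r1 r2 Some \<open>a = Some x\<close> by auto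
    show ?thesis
    proof (cases d)
      case 0
      have p: "0 < H1 []" "0 < H2 []" using n1 unfolding enc_Nil 0 by auto
      have "cr = cmpH 0 (\<lambda>_. 0) (\<lambda>_. 0)"
        by (rule IHR) (simp_all add: H 0 sub_enc0_T)
      then have cr: "cr = 1" by (simp add: cmpH_refl)
      have "cl = cmpH 0 (dec0 H1) (dec0 H2)"
        by (rule IHL) (simp_all add: H 0 sub_enc0_F p Adm_dec0)
      then have "cl = cmpH 0 H1 H2" using cmpH_0 H p 0 by simp
      then show ?thesis using cr Some \<open>a = Some x\<close> 0 unfolding cmpstep_def by simp
    next
      case (Suc d')
      have A: "Adm (Suc d') H1" "Adm (Suc d') H2" using H Suc by auto
      have cr: "cr = cmpH (Suc d') (shift H1) (shift H2)"
        by (rule IHR) (simp_all add: H Suc sub_encS_T Adm_shift A)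
      have cl: "cl = cmpH d' (slice H1) (slice H2)"
        by (rule IHL) (simp_all add: H Suc sub_encS_F Adm_slice A)
      show ?thesis unfolding Suc cmpH_Suc[OF A] cr cl using Some \<open>a = Some x\<close> unfolding cmpstep_def by simp
    qed
  qed
qed




lemma noNN_split: "noNN (subt s u) \<longleftrightarrow> s u \<noteq> Some (None, None) \<and>
   noNN (subt s (u @ [False])) \<and> noNN (subt s (u @ [True]))"
proof
  assume "noNN (subt s u)"
  then show "s u \<noteq> Some (None, None) \<and> noNN (subt s (u @ [False])) \<and> noNN (subt s (u @ [True]))"
    unfolding noNN_def subt_def by (metis append.assoc append_Cons append_Nil append_Nil2)
next
  assume a: "s u \<noteq> Some (None, None) \<and> noNN (subt s (u @ [False])) \<and> noNN (subt s (u @ [True]))"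
  show "noNN (subt s u)" unfolding noNN_def subt_def
  proof
    fix v show "s (u @ v) \<noteq> Some (None, None)"
    proof (cases v)
      case Nil then show ?thesis using a by simp
    next
      case (Cons b w)
      then show ?thesis using a unfolding noNN_def subt_def by (cases b) auto
    qed
  qed
qed

lemma sub_sub': "sub (sub S u) [b] = sub S (u @ [b])" by (rule sub_sub)

lemma crun_autB: "is_tree s \<Longrightarrow>
  fst (crun (autB k) s u) = ST k (noNN (subt s u)) (sub (P1 s) u) \<and>
  fst (snd (crun (autB k) s u)) = ST k (noNN (subt s u)) (sub (P2 s) u) \<and>
  (noNN (subt s u) \<longrightarrow> (\<forall>d H1 H2. Adm d H1 \<longrightarrow> Adm d H2 \<longrightarrow> sub (P1 s) u = enc d H1 \<longrightarrow>
      sub (P2 s) u = enc d H2 \<longrightarrow> snd (snd (crun (autB k) s u)) = cmpH d H1 H2))"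
proof (induction "autB k" s u rule: crun.induct)
  case (1 s u)
  show ?case
  proof (cases "u \<in> dom s \<and> length u < tdepth s")
    case True
    obtain a b where ab: "s u = Some (a, b)" using True by auto
    define L where "L = crun (autB k) s (u @ [False])"
    define R where "R = crun (autB k) s (u @ [True])"
    have e: "crun (autB k) s u = deltaB k (a, b) L R" unfolding L_def R_def
      using True ab by (subst crun.simps) (simp add: autB_def)
    note IL = 1(1)[OF True 1(3), folded L_def] and IR = 1(2)[OF True 1(3), folded R_def]
    have nn: "noNN (subt s u) \<longleftrightarrow> \<not> (a = None \<and> b = None) \<and> noNN (subt s (u @ [False])) \<and> noNN (subt s (u @ [True]))"
      using noNN_split[of s u] ab by auto
    have nn': "noNN (subt s u) \<longleftrightarrow> \<not> (b = None \<and> a = None) \<and> noNN (subt s (u @ [False])) \<and> noNN (subt s (u @ [True]))"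
      using nn by auto
    have r1: "[] \<in> sub (P1 s) u \<longleftrightarrow> a \<noteq> None" using ab unfolding sub_def P1_def by auto
    have r2: "[] \<in> sub (P2 s) u \<longleftrightarrow> b \<noteq> None" using ab unfolding sub_def P2_def by auto
    have c1: "fst (crun (autB k) s u) = ST k (noNN (subt s u)) (sub (P1 s) u)"
      unfolding e deltaB_def comp_abs[OF nn r1, of k] sub_sub' using IL IR by simp
    have c2: "fst (snd (crun (autB k) s u)) = ST k (noNN (subt s u)) (sub (P2 s) u)"
      unfolding e deltaB_def comp_abs[OF nn' r2, of k] sub_sub' using IL IR by simp
    have c3: "snd (snd (crun (autB k) s u)) = cmpH d H1 H2"
      if n: "noNN (subt s u)" and H: "Adm d H1" "Adm d H2" "sub (P1 s) u = enc d H1" "sub (P2 s) u = enc d H2"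
      for d H1 H2
    proof -
      have "cmpstep a b (snd (snd L)) (snd (snd R)) = cmpH d H1 H2"
      proof (rule cmp_abs[OF _ r1 r2 _ _ H])
        show "\<not> (a = None \<and> b = None)" using n nn by auto
        show "snd (snd L) = cmpH d' G1 G2" if "Adm d' G1" "Adm d' G2" "sub (sub (P1 s) u) [False] = enc d' G1"
          "sub (sub (P2 s) u) [False] = enc d' G2" for d' G1 G2
          using IL n nn that unfolding sub_sub' by blast
        show "snd (snd R) = cmpH d' G1 G2" if "Adm d' G1" "Adm d' G2" "sub (sub (P1 s) u) [True] = enc d' G1"
          "sub (sub (P2 s) u) [True] = enc d' G2" for d' G1 G2
          using IR n nn that unfolding sub_sub' by blast
      qed
      then show ?thesis unfolding e deltaB_def by simp
    qed
    show ?thesis using c1 c2 c3 by blast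
  next
    case False
    then have nd: "u \<notin> dom s" using tdepth 1(3) is_tree_def by blast
    have none: "s (u @ v) = None" for v using nd 1(3) unfolding is_tree_def by blast
    then have nN: "noNN (subt s u)" unfolding noNN_def subt_def by simp
    have e1: "sub (P1 s) u = {}" "sub (P2 s) u = {}" using none unfolding sub_def P1_def P2_def by auto
    have ci: "crun (autB k) s u = (empty0 k, empty0 k, 1)"
      using crun_guard[OF False, where A="autB k"] by (simp add: autB_def)
    have c3: "snd (snd (crun (autB k) s u)) = cmpH d H1 H2"
      if H: "Adm d H1" "Adm d H2" "sub (P1 s) u = enc d H1" "sub (P2 s) u = enc d H2" for d H1 H2
    proof -
      have "H1 = (\<lambda>_. 0)" "H2 = (\<lambda>_. 0)" using H e1 enc_empty_iff by metis+
      then show ?thesis using ci cmpH_refl by simp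
    qed
    have c12: "fst (crun (autB k) s u) = ST k (noNN (subt s u)) (sub (P1 s) u)"
      "fst (snd (crun (autB k) s u)) = ST k (noNN (subt s u)) (sub (P2 s) u)"
      using ci e1 nN semv_empty unfolding ST_def by simp_all
    show ?thesis using c12 c3 by blast
  qed
qed

lemma subt_Nil[simp]: "subt s [] = s"
  unfolding subt_def by simp

lemma conv_P: "noNN s \<Longrightarrow> s = conv (tr (P1 s)) (tr (P2 s))"
proof (rule ext)
  fix u assume n: "noNN s"
  show "s u = conv (tr (P1 s)) (tr (P2 s)) u"
  proof (cases "s u")
    case None then show ?thesis unfolding conv_def P1_def P2_def by auto
  next
    case (Some p)
    then obtain a b where ab: "s u = Some (a, b)" by (cases p) auto
    have "\<not> (a = None \<and> b = None)" using n ab unfolding noNN_def by blast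
    then show ?thesis using ab unfolding conv_def P1_def P2_def tr_def by (cases a; cases b) auto
  qed
qed

lemma P_conv: "P1 (conv (tr S1) (tr S2)) = S1" "P2 (conv (tr S1) (tr S2)) = S2"
  "noNN (conv (tr S1) (tr S2))"
  unfolding P1_def P2_def noNN_def conv_def tr_def by auto

lemma is_tree_conv: "is_tree (tr S1) \<Longrightarrow> is_tree (tr S2) \<Longrightarrow> is_tree (conv (tr S1) (tr S2))"
proof -
  assume a: "is_tree (tr S1)" "is_tree (tr S2)"
  have d: "dom (conv (tr S1) (tr S2)) = S1 \<union> S2" unfolding conv_def by (auto split: if_splits)
  show ?thesis using a unfolding is_tree_tr unfolding is_tree_def d by blast
qed

lemma cmpH_in: "cmpH d H1 H2 \<in> {0,1,2}"
  unfolding cmpH_def by auto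

lemma lang_autB: "lang (autB k) = {conv (tr (enc k H1)) (tr (enc k H2)) | H1 H2.
    Adm k H1 \<and> Adm k H2 \<and> cmpH k H1 H2 \<noteq> 2}"
proof (intro equalityI subsetI)
  fix s assume "s \<in> lang (autB k)"
  then have s: "is_tree s" "crun (autB k) s [] \<in> final (autB k)" unfolding lang_def using accepts_crun by blast+
  note I = crun_autB[OF s(1), of k "[]", simplified]
  have f: "k \<in> snd (fst (crun (autB k) s []))" "k \<in> snd (fst (snd (crun (autB k) s [])))"
    "snd (snd (crun (autB k) s [])) \<noteq> 2" using s(2) unfolding autB_def by auto
  have n: "noNN s" using f(1) I unfolding ST_def dead_def by (auto split: if_splits)
  have "P1 s \<in> V k" "P2 s \<in> V k" using f I n unfolding ST_def semv_def by auto
  then obtain H1 H2 where H: "Adm k H1" "P1 s = enc k H1" "Adm k H2" "P2 s = enc k H2"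
    unfolding V_def by auto
  have "cmpH k H1 H2 \<noteq> 2" using f(3) I n H by metis
  then show "s \<in> {conv (tr (enc k H1)) (tr (enc k H2)) | H1 H2. Adm k H1 \<and> Adm k H2 \<and> cmpH k H1 H2 \<noteq> 2}"
    using conv_P[OF n] H by auto
next
  fix s assume "s \<in> {conv (tr (enc k H1)) (tr (enc k H2)) | H1 H2. Adm k H1 \<and> Adm k H2 \<and> cmpH k H1 H2 \<noteq> 2}"
  then obtain H1 H2 where H: "Adm k H1" "Adm k H2" "cmpH k H1 H2 \<noteq> 2"
    and s: "s = conv (tr (enc k H1)) (tr (enc k H2))" by blast
  have ts: "is_tree s" unfolding s using is_tree_conv is_tree_enc H by blast
  note I = crun_autB[OF ts, of k "[]", simplified]
  have P: "P1 s = enc k H1" "P2 s = enc k H2" "noNN s" unfolding s using P_conv by auto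
  have V: "enc k H1 \<in> V k" "enc k H2 \<in> V k" using H unfolding V_def by auto
  have "crun (autB k) s [] = (semv k (enc k H1), semv k (enc k H2), cmpH k H1 H2)"
    using I P H unfolding ST_def by (metis prod.collapse)
  moreover have "(semv k (enc k H1), semv k (enc k H2), cmpH k H1 H2) \<in> final (autB k)"
    using V H(3) cmpH_in unfolding autB_def StB_def semv_def by auto
  ultimately show "s \<in> lang (autB k)" unfolding lang_def using accepts_crun[OF ts, of "autB k"] ts by simp
qed




definition Ifun :: "nat \<Rightarrow> (nat \<Rightarrow> nat) set" where "Ifun k = {x. \<forall>i. k \<le> i \<longrightarrow> x i = 0}"
definition fromfun :: "nat \<Rightarrow> (nat \<Rightarrow> nat) \<Rightarrow> nat list" where "fromfun k x = map x (rev [0..<k])"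
definition tofun :: "nat \<Rightarrow> nat list \<Rightarrow> nat \<Rightarrow> nat" where
  "tofun k xs = (\<lambda>i. if i < k then xs ! (k - 1 - i) else 0)"
definition toH :: "nat \<Rightarrow> ((nat \<Rightarrow> nat) \<Rightarrow> nat) \<Rightarrow> nat list \<Rightarrow> nat" where
  "toH k F = (\<lambda>xs. if length xs = k then F (tofun k xs) else 0)"
definition Ofun :: "nat \<Rightarrow> ((nat \<Rightarrow> nat) \<Rightarrow> nat) set" where "Ofun k = {F. fin_supp (Ifun k) F}"

lemma Field_omega_exp: "Field (omega_exp r) = {f. fin_supp (Field r) f}"
proof (intro equalityI subsetI)
  fix f assume "f \<in> Field (omega_exp r)" then show "f \<in> {f. fin_supp (Field r) f}"
    unfolding Field_def omega_exp_def by auto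
next
  fix f assume "f \<in> {f. fin_supp (Field r) f}"
  then have "(f, f) \<in> omega_exp r" unfolding omega_exp_def by auto
  then show "f \<in> Field (omega_exp r)" unfolding Field_def by auto
qed

lemma Field_fin_ord: "Field (fin_ord k) = {..<k}"
proof (intro equalityI subsetI)
  fix i assume "i \<in> Field (fin_ord k)" then show "i \<in> {..<k}" unfolding Field_def fin_ord_def by auto
next
  fix i assume "i \<in> {..<k}" then have "(i, i) \<in> fin_ord k" unfolding fin_ord_def by auto
  then show "i \<in> Field (fin_ord k)" unfolding Field_def by auto
qed

lemma IField: "Field (omega_exp (fin_ord k)) = Ifun k"
proof -
  have "fin_supp {..<k} x \<longleftrightarrow> (\<forall>i. k \<le> i \<longrightarrow> x i = 0)" for x :: "nat \<Rightarrow> nat"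
  proof
    assume "\<forall>i. k \<le> i \<longrightarrow> x i = 0"
    then have "{i. x i \<noteq> 0} \<subseteq> {..<k}"
    proof (intro subsetI)
      fix i assume "\<forall>i. k \<le> i \<longrightarrow> x i = 0" "i \<in> {i. x i \<noteq> 0}"
      then show "i \<in> {..<k}" by (cases "k \<le> i") auto
    qed
    then show "fin_supp {..<k} x" using \<open>\<forall>i. k \<le> i \<longrightarrow> x i = 0\<close> unfolding fin_supp_def
      using finite_subset by auto
  qed (auto simp: fin_supp_def)
  then show ?thesis unfolding Field_omega_exp Field_fin_ord Ifun_def by auto
qed

lemma OField: "Field (omega_omega_pow k) = Ofun k"
  unfolding omega_omega_pow_def Field_omega_exp[of "omega_exp (fin_ord k)"] IField Ofun_def ..

lemma len_fromfun[simp]: "length (fromfun k x) = k"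
  unfolding fromfun_def by simp

lemma nth_fromfun: "i < k \<Longrightarrow> fromfun k x ! i = x (k - 1 - i)"
  unfolding fromfun_def by (simp add: rev_nth)

lemma tofun_in: "tofun k xs \<in> Ifun k"
  unfolding tofun_def Ifun_def by auto

lemma to_from: "x \<in> Ifun k \<Longrightarrow> tofun k (fromfun k x) = x"
  unfolding tofun_def Ifun_def by (auto simp: nth_fromfun)

lemma from_to: "length xs = k \<Longrightarrow> fromfun k (tofun k xs) = xs"
  by (rule nth_equalityI) (auto simp: nth_fromfun tofun_def)

lemma lex_nth: "length xs = length ys \<Longrightarrow>
   xs < ys \<longleftrightarrow> (\<exists>i<length xs. xs ! i < ys ! i \<and> (\<forall>j<i. xs ! j = ys ! j))"
proof (induction xs arbitrary: ys)
  case Nil then show ?case by simp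
next
  case (Cons a xs)
  then obtain b ys' where ys: "ys = b # ys'" by (cases ys) auto
  have l: "length xs = length ys'" using Cons ys by simp
  have "(\<exists>i<length (a # xs). (a # xs) ! i < (b # ys') ! i \<and> (\<forall>j<i. (a # xs) ! j = (b # ys') ! j)) \<longleftrightarrow>
        a < b \<or> (a = b \<and> (\<exists>i<length xs. xs ! i < ys' ! i \<and> (\<forall>j<i. xs ! j = ys' ! j)))"
  proof
    assume "\<exists>i<length (a # xs). (a # xs) ! i < (b # ys') ! i \<and> (\<forall>j<i. (a # xs) ! j = (b # ys') ! j)"
    then obtain i where i: "i < length (a # xs)" "(a # xs) ! i < (b # ys') ! i" "\<forall>j<i. (a # xs) ! j = (b # ys') ! j"
      by blast
    show "a < b \<or> (a = b \<and> (\<exists>i<length xs. xs ! i < ys' ! i \<and> (\<forall>j<i. xs ! j = ys' ! j)))"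
    proof (cases i)
      case 0 then show ?thesis using i by simp
    next
      case (Suc i')
      have "a = b" using i(3)[rule_format, of 0] Suc by simp
      moreover have "\<forall>j<i'. xs ! j = ys' ! j" using i(3) Suc by auto
      ultimately show ?thesis using i Suc by auto
    qed
  next
    assume "a < b \<or> (a = b \<and> (\<exists>i<length xs. xs ! i < ys' ! i \<and> (\<forall>j<i. xs ! j = ys' ! j)))"
    then show "\<exists>i<length (a # xs). (a # xs) ! i < (b # ys') ! i \<and> (\<forall>j<i. (a # xs) ! j = (b # ys') ! j)"
    proof
      assume "a < b" then show ?thesis by (intro exI[of _ 0]) auto
    next
      assume "a = b \<and> (\<exists>i<length xs. xs ! i < ys' ! i \<and> (\<forall>j<i. xs ! j = ys' ! j))"
      then obtain i where i: "a = b" "i < length xs" "xs ! i < ys' ! i" "\<forall>j<i. xs ! j = ys' ! j" by blast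
      show ?thesis
      proof (intro exI[of _ "Suc i"] conjI allI impI)
        fix j assume "j < Suc i" then show "(a # xs) ! j = (b # ys') ! j" using i by (cases j) auto
      qed (use i in auto)
    qed
  qed
  then show ?case using Cons.IH[OF l] ys by simp
qed

lemma omega_exp_mem: "(f, g) \<in> omega_exp r \<longleftrightarrow> fin_supp (Field r) f \<and> fin_supp (Field r) g \<and>
      (f = g \<or> (\<exists>a\<in>Field r. f a < g a \<and> (\<forall>b\<in>Field r. (a, b) \<in> r \<and> b \<noteq> a \<longrightarrow> f b = g b)))"
  unfolding omega_exp_def by simp

lemma inner_iff:
  assumes x: "x \<in> Ifun k" and y: "y \<in> Ifun k"
  shows "((x, y) \<in> omega_exp (fin_ord k) \<and> y \<noteq> x) \<longleftrightarrow> fromfun k x < fromfun k y"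
proof -
  have fs: "fin_supp (Field (fin_ord k)) x" "fin_supp (Field (fin_ord k)) y"
    using x y IField Field_omega_exp by blast+
  have fs': "fin_supp {..<k} x" "fin_supp {..<k} y" using fs Field_fin_ord by simp_all
  have ab: "((a, b) \<in> fin_ord k \<and> b \<noteq> a) \<longleftrightarrow> (a < b \<and> b < k)" for a b
    unfolding fin_ord_def by auto
  have L: "((x, y) \<in> omega_exp (fin_ord k) \<and> y \<noteq> x) \<longleftrightarrow>
      (\<exists>a<k. x a < y a \<and> (\<forall>b<k. a < b \<longrightarrow> x b = y b))"
  proof
    assume h: "(x, y) \<in> omega_exp (fin_ord k) \<and> y \<noteq> x"
    then obtain a where a: "a < k" "x a < y a" "\<forall>b\<in>{..<k}. (a, b) \<in> fin_ord k \<and> b \<noteq> a \<longrightarrow> x b = y b"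
      unfolding omega_exp_mem Field_fin_ord by auto
    show "\<exists>a<k. x a < y a \<and> (\<forall>b<k. a < b \<longrightarrow> x b = y b)"
    proof (intro exI[of _ a] conjI allI impI)
      fix b assume "b < k" "a < b" then show "x b = y b" using a(3) ab by auto
    qed (use a in auto)
  next
    assume "\<exists>a<k. x a < y a \<and> (\<forall>b<k. a < b \<longrightarrow> x b = y b)"
    then obtain a where a: "a < k" "x a < y a" "\<forall>b<k. a < b \<longrightarrow> x b = y b" by blast
    have "\<forall>b\<in>{..<k}. (a, b) \<in> fin_ord k \<and> b \<noteq> a \<longrightarrow> x b = y b" using a(3) ab by auto
    then have "(x, y) \<in> omega_exp (fin_ord k)" unfolding omega_exp_mem Field_fin_ord using fs' a
      by auto
    moreover have "y \<noteq> x" using a by auto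
    ultimately show "(x, y) \<in> omega_exp (fin_ord k) \<and> y \<noteq> x" by blast
  qed
  have R: "fromfun k x < fromfun k y \<longleftrightarrow> (\<exists>i<k. x (k - 1 - i) < y (k - 1 - i) \<and> (\<forall>j<i. x (k - 1 - j) = y (k - 1 - j)))"
    using lex_nth[of "fromfun k x" "fromfun k y"] by (auto simp: nth_fromfun)
  have "(\<exists>a<k. x a < y a \<and> (\<forall>b<k. a < b \<longrightarrow> x b = y b)) \<longleftrightarrow>
        (\<exists>i<k. x (k - 1 - i) < y (k - 1 - i) \<and> (\<forall>j<i. x (k - 1 - j) = y (k - 1 - j)))"
  proof
    assume "\<exists>a<k. x a < y a \<and> (\<forall>b<k. a < b \<longrightarrow> x b = y b)"
    then obtain a where a: "a < k" "x a < y a" "\<forall>b<k. a < b \<longrightarrow> x b = y b" by blast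
    show "\<exists>i<k. x (k - 1 - i) < y (k - 1 - i) \<and> (\<forall>j<i. x (k - 1 - j) = y (k - 1 - j))"
    proof (intro exI[of _ "k - 1 - a"] conjI allI impI)
      show "k - 1 - a < k" using a by simp
      have "k - 1 - (k - 1 - a) = a" using a by simp
      then show "x (k - 1 - (k - 1 - a)) < y (k - 1 - (k - 1 - a))" using a by simp
      fix j assume "j < k - 1 - a"
      then show "x (k - 1 - j) = y (k - 1 - j)" using a(3)[rule_format, of "k - 1 - j"] by simp
    qed
  next
    assume "\<exists>i<k. x (k - 1 - i) < y (k - 1 - i) \<and> (\<forall>j<i. x (k - 1 - j) = y (k - 1 - j))"
    then obtain i where i: "i < k" "x (k - 1 - i) < y (k - 1 - i)" "\<forall>j<i. x (k - 1 - j) = y (k - 1 - j)" by blast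
    show "\<exists>a<k. x a < y a \<and> (\<forall>b<k. a < b \<longrightarrow> x b = y b)"
    proof (intro exI[of _ "k - 1 - i"] conjI allI impI)
      show "k - 1 - i < k" using i by simp
      show "x (k - 1 - i) < y (k - 1 - i)" using i by simp
      fix b assume "b < k" "k - 1 - i < b"
      then have "k - 1 - (k - 1 - b) = b" "k - 1 - b < i" by auto
      then show "x b = y b" using i(3)[rule_format, of "k - 1 - b"] by simp
    qed
  qed
  then show ?thesis using L R by simp
qed

lemma toH_Adm: assumes "F \<in> Ofun k" shows "Adm k (toH k F)"
proof -
  have "{xs. toH k F xs \<noteq> 0} \<subseteq> fromfun k ` {x. F x \<noteq> 0}"
  proof
    fix xs assume "xs \<in> {xs. toH k F xs \<noteq> 0}"
    then have "length xs = k" "F (tofun k xs) \<noteq> 0" unfolding toH_def by (auto split: if_splits)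
    then show "xs \<in> fromfun k ` {x. F x \<noteq> 0}" using from_to[of xs k]
      by (intro image_eqI[of _ _ "tofun k xs"]) auto
  qed
  moreover have "finite {x. F x \<noteq> 0}" using assms unfolding Ofun_def fin_supp_def by blast
  ultimately have fs: "finite {xs. toH k F xs \<noteq> 0}" using finite_subset by blast
  show ?thesis unfolding Adm_def
  proof (intro conjI)
    show "\<forall>xs. length xs \<noteq> k \<longrightarrow> toH k F xs = 0" by (simp add: toH_def)
  qed (rule fs)
qed

lemma toH_inj: assumes "F \<in> Ofun k" "G \<in> Ofun k" "toH k F = toH k G" shows "F = G"
proof
  fix x show "F x = G x"
  proof (cases "x \<in> Ifun k")
    case True
    have "toH k F (fromfun k x) = toH k G (fromfun k x)" using assms(3) by simp
    then show ?thesis unfolding toH_def using to_from[OF True] by simp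
  next
    case False then show ?thesis using assms unfolding Ofun_def fin_supp_def by auto
  qed
qed

lemma toH_surj: assumes "Adm k H" shows "\<exists>F\<in>Ofun k. toH k F = H"
proof -
  define F where "F = (\<lambda>x. if x \<in> Ifun k then H (fromfun k x) else 0)"
  have "{x. F x \<noteq> 0} \<subseteq> tofun k ` {xs. H xs \<noteq> 0}"
  proof
    fix x assume "x \<in> {x. F x \<noteq> 0}"
    then have "x \<in> Ifun k" "H (fromfun k x) \<noteq> 0" unfolding F_def by (auto split: if_splits)
    then show "x \<in> tofun k ` {xs. H xs \<noteq> 0}" using to_from[of x k]
      by (intro image_eqI[of _ _ "fromfun k x"]) auto
  qed
  moreover have "finite {xs. H xs \<noteq> 0}" using assms Adm_def by blast
  ultimately have fs: "finite {x. F x \<noteq> 0}" using finite_subset by blast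
  have "F \<in> Ofun k" unfolding Ofun_def fin_supp_def mem_Collect_eq
  proof (intro conjI)
    show "\<forall>x. x \<notin> Ifun k \<longrightarrow> F x = 0" by (simp add: F_def)
  qed (rule fs)
  moreover have "toH k F = H"
  proof
    fix xs show "toH k F xs = H xs"
      using assms from_to tofun_in unfolding toH_def F_def Adm_def by auto
  qed
  ultimately show ?thesis by blast
qed

lemma bij_toH: "bij_betw (toH k) (Ofun k) (Collect (Adm k))"
  unfolding bij_betw_def inj_on_def using toH_inj toH_Adm toH_surj by fastforce

lemma lessH_iff:
  assumes "F \<in> Ofun k" "G \<in> Ofun k"
  shows "(\<exists>x\<in>Ifun k. F x < G x \<and> (\<forall>y\<in>Ifun k. (x, y) \<in> omega_exp (fin_ord k) \<and> y \<noteq> x \<longrightarrow> F y = G y))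
    \<longleftrightarrow> lessH k (toH k F) (toH k G)"
proof
  assume "\<exists>x\<in>Ifun k. F x < G x \<and> (\<forall>y\<in>Ifun k. (x, y) \<in> omega_exp (fin_ord k) \<and> y \<noteq> x \<longrightarrow> F y = G y)"
  then obtain x where x: "x \<in> Ifun k" "F x < G x" "\<forall>y\<in>Ifun k. (x, y) \<in> omega_exp (fin_ord k) \<and> y \<noteq> x \<longrightarrow> F y = G y"
    by blast
  show "lessH k (toH k F) (toH k G)" unfolding lessH_def
  proof (intro exI[of _ "fromfun k x"] conjI allI impI)
    show "length (fromfun k x) = k" by simp
    show "toH k F (fromfun k x) < toH k G (fromfun k x)" unfolding toH_def using to_from[OF x(1)] x by simp
    fix ys assume ys: "length ys = k \<and> fromfun k x < ys"
    have "fromfun k x < fromfun k (tofun k ys)" using ys from_to[of ys k] by simp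
    then have "F (tofun k ys) = G (tofun k ys)" using x(3) inner_iff[OF x(1) tofun_in] tofun_in by blast
    then show "toH k F ys = toH k G ys" unfolding toH_def by simp
  qed
next
  assume "lessH k (toH k F) (toH k G)"
  then obtain xs where xs: "length xs = k" "toH k F xs < toH k G xs"
    "\<forall>ys. length ys = k \<and> xs < ys \<longrightarrow> toH k F ys = toH k G ys" unfolding lessH_def by blast
  show "\<exists>x\<in>Ifun k. F x < G x \<and> (\<forall>y\<in>Ifun k. (x, y) \<in> omega_exp (fin_ord k) \<and> y \<noteq> x \<longrightarrow> F y = G y)"
  proof (intro bexI[of _ "tofun k xs"] conjI ballI impI)
    show "tofun k xs \<in> Ifun k" by (rule tofun_in)
    show "F (tofun k xs) < G (tofun k xs)" using xs unfolding toH_def by simp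
    fix y assume y: "y \<in> Ifun k" "(tofun k xs, y) \<in> omega_exp (fin_ord k) \<and> y \<noteq> tofun k xs"
    then have "fromfun k (tofun k xs) < fromfun k y" using inner_iff tofun_in by blast
    then have "xs < fromfun k y" using from_to xs by simp
    then have "toH k F (fromfun k y) = toH k G (fromfun k y)" using xs(3) by simp
    then show "F y = G y" unfolding toH_def using to_from[OF y(1)] by simp
  qed
qed

lemma le_iff: "(F, G) \<in> omega_omega_pow k \<longleftrightarrow> F \<in> Ofun k \<and> G \<in> Ofun k \<and> cmpH k (toH k F) (toH k G) \<noteq> 2"
proof -
  have "(F, G) \<in> omega_omega_pow k \<longleftrightarrow> F \<in> Ofun k \<and> G \<in> Ofun k \<and>
     (F = G \<or> (\<exists>x\<in>Ifun k. F x < G x \<and> (\<forall>y\<in>Ifun k. (x, y) \<in> omega_exp (fin_ord k) \<and> y \<noteq> x \<longrightarrow> F y = G y)))"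
    unfolding omega_omega_pow_def omega_exp_mem[of F G "omega_exp (fin_ord k)"] IField Ofun_def by simp
  also have "\<dots> \<longleftrightarrow> F \<in> Ofun k \<and> G \<in> Ofun k \<and> cmpH k (toH k F) (toH k G) \<noteq> 2"
  proof (cases "F \<in> Ofun k \<and> G \<in> Ofun k")
    case True
    then have "F = G \<longleftrightarrow> toH k F = toH k G" using toH_inj by blast
    then show ?thesis using lessH_iff[of F k G] True unfolding cmpH_def by auto
  next
    case False then show ?thesis by auto
  qed
  finally show ?thesis .
qed

theorem lemma3p13:
  fixes k :: nat
  shows "\<exists>(A :: (unit, nat) ta) (Ale :: (unit option \<times> unit option, nat) ta)
            (\<mu> :: ((nat \<Rightarrow> nat) \<Rightarrow> nat) \<Rightarrow> unit tree).
           tree_automatic_presentation (omega_omega_pow k) A Ale \<mu>"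
proof -
  obtain A :: "(unit, nat) ta" where A: "wf_ta A" "lang A = lang (autA k)"
    using natify[OF wf_autA] by blast
  obtain Ale :: "(unit option \<times> unit option, nat) ta" where Ale: "wf_ta Ale" "lang Ale = lang (autB k)"
    using natify[OF wf_autB] by blast
  define \<mu> where "\<mu> = (\<lambda>F. tr (enc k (toH k F)))"
  have trinj: "inj tr" unfolding inj_def by (metis dom_tr)
  have b1: "bij_betw (enc k) (Collect (Adm k)) (V k)"
    unfolding bij_betw_def V_def inj_on_def using enc_inj by auto
  have b2: "bij_betw tr (V k) (tr ` V k)"
    using trinj by (simp add: bij_betw_imageI inj_on_subset)
  have "bij_betw (tr \<circ> (enc k \<circ> toH k)) (Ofun k) (tr ` V k)"
    using bij_betw_trans[OF bij_betw_trans[OF bij_toH b1] b2] by simp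
  then have bij: "bij_betw \<mu> (Field (omega_omega_pow k)) (lang A)"
    unfolding \<mu>_def OField A(2) lang_autA comp_def by simp
  have "{conv (\<mu> a) (\<mu> b) | a b. (a, b) \<in> omega_omega_pow k} =
        {conv (tr (enc k H1)) (tr (enc k H2)) | H1 H2. Adm k H1 \<and> Adm k H2 \<and> cmpH k H1 H2 \<noteq> 2}"
  proof (intro equalityI subsetI)
    fix s assume "s \<in> {conv (\<mu> a) (\<mu> b) | a b. (a, b) \<in> omega_omega_pow k}"
    then obtain a b where "s = conv (\<mu> a) (\<mu> b)" "(a, b) \<in> omega_omega_pow k" by blast
    then show "s \<in> {conv (tr (enc k H1)) (tr (enc k H2)) | H1 H2. Adm k H1 \<and> Adm k H2 \<and> cmpH k H1 H2 \<noteq> 2}"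
      unfolding le_iff \<mu>_def using toH_Adm by blast
  next
    fix s assume "s \<in> {conv (tr (enc k H1)) (tr (enc k H2)) | H1 H2. Adm k H1 \<and> Adm k H2 \<and> cmpH k H1 H2 \<noteq> 2}"
    then obtain H1 H2 where H: "s = conv (tr (enc k H1)) (tr (enc k H2))" "Adm k H1" "Adm k H2" "cmpH k H1 H2 \<noteq> 2"
      by blast
    obtain F G where FG: "F \<in> Ofun k" "toH k F = H1" "G \<in> Ofun k" "toH k G = H2"
      using toH_surj H by metis
    then have "(F, G) \<in> omega_omega_pow k" using le_iff H by simp
    then show "s \<in> {conv (\<mu> a) (\<mu> b) | a b. (a, b) \<in> omega_omega_pow k}"
      unfolding \<mu>_def using H FG by blast
  qed
  then have "lang Ale = {conv (\<mu> a) (\<mu> b) | a b. (a, b) \<in> omega_omega_pow k}"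
    using Ale(2) lang_autB by simp
  then have "tree_automatic_presentation (omega_omega_pow k) A Ale \<mu>"
    unfolding tree_automatic_presentation_def using A Ale bij by blast
  then show ?thesis by blast
qed


end
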